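(* Let $\mathcal{P}$ be a fixed hyper-prior (chosen independently of the data) and let $\delta>0$. Then with probability at least $1-\delta$ over the sampling of the training datasets $S_1,\dots,S_n$, simultaneously for all hyper-posteriors $\mathcal{Q}$ and all posteriors $Q_1,\dots,Q_n$, $$\frac1n\sum_{i=1}^n \mathcal{R}_i(Q_i)\;\le\;\frac1n\sum_{i=1}^n \widehat{\mathcal{R}}_i(Q_i)+\sqrt{\frac{\mathrm{KL}(\mathfrak{Q}\|\mathfrak{P})+\log\frac{4m_{\mathrm h}n}{\delta}+1}{2m_{\mathrm h}n}},$$ where $m_{\mathrm h}=\dfrac{n}{\sum_{i=1}^n 1/m_i}$ is the harmonic mean of the training set sizes.
   Context: Multi-task setting: there are $n$ tasks; task $i$ has an unknown data distribution $D_i$ on a sample space $\mathcal{Z}$, a loss $\ell_i:\mathcal{F}\times\mathcal{Z}\to[0,1]$ on a hypothesis set $\mathcal{F}$, and a training set $S_i=(z_{i1},\dots,z_{im_i})$ of $m_i\ge1$ i.i.d. samples from $D_i$; the datasets $S_1,\dots,S_n$ are mutually independent. $\mathcal{M}(\mathcal{F})$ denotes the set of probability distributions on $\mathcal{F}$. For $Q\in\mathcal{M}(\mathcal{F})$, $\ell_i(Q,z)=\mathbb{E}_{f\sim Q}\ell_i(f,z)$, the true risk is $\mathcal{R}_i(Q)=\mathbb{E}_{z\sim D_i}\ell_i(Q,z)$ and the empirical risk is $\widehat{\mathcal{R}}_i(Q)=\frac1{m_i}\sum_{j=1}^{m_i}\ell_i(Q,z_{ij})$. A hyper-prior $\mathcal{P}$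 and a hyper-posterior $\mathcal{Q}$ are probability distributions on $\mathcal{M}(\mathcal{F})$ (the hyper-posterior and posteriors $Q_i\in\mathcal{M}(\mathcal{F})$ may depend on the data). $\mathfrak{Q}$ is the distribution on $\mathcal{M}(\mathcal{F})\times\mathcal{F}^n$ given by the product $\mathcal{Q}\times Q_1\times\cdots\times Q_n$; $\mathfrak{P}$ is the distribution on $\mathcal{M}(\mathcal{F})\times\mathcal{F}^n$ generated by sampling $P\sim\mathcal{P}$ and then $f_1,\dots,f_n$ i.i.d. from $P$. $\mathrm{KL}$ denotes the Kullback–Leibler divergence. *)

theory Defs
  imports "HOL-Probability.Probability"
begin

text \<open>Joint distribution of all training sets: task i gets m i i.i.d. samples from D i,
  tasks independent.  A sample is S :: nat => nat => 'z, with S i j = z_ij.\<close>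
definition sample_measure :: "nat \<Rightarrow> (nat \<Rightarrow> nat) \<Rightarrow> (nat \<Rightarrow> 'z measure) \<Rightarrow> (nat \<Rightarrow> nat \<Rightarrow> 'z) measure" where
  "sample_measure n m D = PiM {..<n} (\<lambda>i. PiM {..<m i} (\<lambda>j. D i))"

definition gibbs_loss :: "('f \<Rightarrow> 'z \<Rightarrow> real) \<Rightarrow> 'f measure \<Rightarrow> 'z \<Rightarrow> real" where
  "gibbs_loss l Q z = (\<integral>f. l f z \<partial>Q)"

definition true_risk :: "'z measure \<Rightarrow> ('f \<Rightarrow> 'z \<Rightarrow> real) \<Rightarrow> 'f measure \<Rightarrow> real" where
  "true_risk D l Q = (\<integral>z. gibbs_loss l Q z \<partial>D)"

definition emp_risk :: "nat \<Rightarrow> ('f \<Rightarrow> 'z \<Rightarrow> real) \<Rightarrow> 'f measure \<Rightarrow> (nat \<Rightarrow> 'z) \<Rightarrow> real" where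
  "emp_risk mi l Q s = (\<Sum>j<mi. gibbs_loss l Q (s j)) / real mi"

definition hyper_post_joint :: "nat \<Rightarrow> 'f measure measure \<Rightarrow> (nat \<Rightarrow> 'f measure) \<Rightarrow> ('f measure \<times> (nat \<Rightarrow> 'f)) measure" where
  "hyper_post_joint n HQ Q = HQ \<Otimes>\<^sub>M PiM {..<n} Q"

definition hyper_prior_joint :: "nat \<Rightarrow> 'f measure \<Rightarrow> 'f measure measure \<Rightarrow> ('f measure \<times> (nat \<Rightarrow> 'f)) measure" where
  "hyper_prior_joint n F HP = HP \<bind> (\<lambda>P. distr (PiM {..<n} (\<lambda>_. P))
       (prob_algebra F \<Otimes>\<^sub>M PiM {..<n} (\<lambda>_. F)) (\<lambda>fs. (P, fs)))"

definition kl_div :: "'a measure \<Rightarrow> 'a measure \<Rightarrow> ereal" where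
  "kl_div N M = (if sets N = sets M \<and> absolutely_continuous M N
       \<and> integrable N (entropy_density (exp 1) M N)
     then ereal (KL_divergence (exp 1) M N) else \<infinity>)"

fun sqrt_ext :: "ereal \<Rightarrow> ereal" where
  "sqrt_ext (ereal x) = ereal (sqrt x)"
| "sqrt_ext PInfty = PInfty"
| "sqrt_ext MInfty = MInfty"

end

theory Submission
  imports Defs
begin


lemma emeasure_distr_le_space: "emeasure (distr M N f) X \<le> emeasure M (space M)"
proof -
  have "emeasure M (f -` X \<inter> space M) \<le> emeasure M (space M)"
    by (cases "f -` X \<inter> space M \<in> sets M") (auto intro!: emeasure_mono simp: emeasure_notin_sets)
  then show ?thesis
    unfolding distr_def emeasure_measure_of_conv by auto
qed

lemma hpj_sets:
  assumes "prob_space HP"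
  shows "sets (hyper_prior_joint n F HP) = sets (prob_algebra F \<Otimes>\<^sub>M PiM {..<n} (\<lambda>_. F))"
  unfolding hyper_prior_joint_def
  by (rule sets_bind) (auto simp: prob_space.not_empty[OF assms])

lemma hpj_le1:
  assumes HP: "prob_space HP"
  shows "emeasure (hyper_prior_joint n F HP) A \<le> 1"
proof -
  define T where "T = prob_algebra F \<Otimes>\<^sub>M PiM {..<n} (\<lambda>_. F)"
  define N where "N = (\<lambda>P. distr (PiM {..<n} (\<lambda>_. P)) T (\<lambda>fs. (P, fs)))"
  define K0 where "K0 = N (SOME x. x \<in> space HP)"
  have ne: "space HP \<noteq> {}" by (simp add: prob_space.not_empty[OF HP])
  have eq: "hyper_prior_joint n F HP = join (distr HP (subprob_algebra K0) N)"
    unfolding hyper_prior_joint_def K0_def N_def T_def by (simp add: bind_nonempty ne)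
  show ?thesis
  proof (cases "A \<in> sets K0")
    case False
    have "sets (join (distr HP (subprob_algebra K0) N)) = sets K0" by simp
    then show ?thesis using False by (simp add: eq emeasure_notin_sets)
  next
    case True
    have "emeasure (hyper_prior_joint n F HP) A = (\<integral>\<^sup>+ M'. emeasure M' A \<partial>(distr HP (subprob_algebra K0) N))"
      unfolding eq by (rule emeasure_join) (auto simp: True)
    also have "\<dots> \<le> (\<integral>\<^sup>+ M'. 1 \<partial>(distr HP (subprob_algebra K0) N))"
      by (intro nn_integral_mono) (auto simp: space_subprob_algebra intro: subprob_space.subprob_emeasure_le_1)
    also have "\<dots> = emeasure (distr HP (subprob_algebra K0) N) (space (distr HP (subprob_algebra K0) N))"
      by simp
    also have "\<dots> \<le> emeasure HP (space HP)" by (rule emeasure_distr_le_space)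
    also have "\<dots> = 1" using HP by (simp add: prob_space.emeasure_space_1)
    finally show ?thesis .
  qed
qed

lemma hpj_finite:
  assumes HP: "prob_space HP"
  shows "finite_measure (hyper_prior_joint n F HP)"
  by (intro finite_measureI) (use hpj_le1[OF HP, of n F "space (hyper_prior_joint n F HP)"] in \<open>auto simp: top_unique\<close>)



lemma (in finite_measure) DV:
  fixes g :: "'a \<Rightarrow> real" and N :: "'a measure"
  assumes sN: "sets N = sets M" and ac: "absolutely_continuous M N" and pN: "prob_space N"
    and int: "integrable N (entropy_density (exp 1) M N)"
    and gm[measurable]: "g \<in> borel_measurable M" and gB: "\<And>x. x \<in> space M \<Longrightarrow> \<bar>g x\<bar> \<le> B"
    and ZC: "(\<integral>x. exp (g x) \<partial>M) \<le> C"
  shows "(\<integral>x. g x \<partial>N) \<le> KL_divergence (exp 1) M N + ln C"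
proof -
  define p where "p = RN_deriv M N"
  have pm[measurable]: "p \<in> borel_measurable M" unfolding p_def by simp
  have Nd: "density M p = N" unfolding p_def using density_RN_deriv[OF ac sN] .
  have gmN[measurable]: "g \<in> borel_measurable N" using gm measurable_cong_sets[OF sN refl] by blast
  have pmN[measurable]: "p \<in> borel_measurable N" using pm measurable_cong_sets[OF sN refl] by blast
  have gl: "- B \<le> g x" and gu: "g x \<le> B" if "x \<in> space M" for x
    using gB[OF that] by (simp_all add: abs_le_iff)
  have intgM: "integrable M (\<lambda>x. exp (g x))"
    by (rule integrable_const_bound[where B="exp B"]) (use gu in auto)
  have intgN: "integrable N g"
    using pN by (intro finite_measure.integrable_const_bound[where B=B] prob_space.finite_measure) (use gB sets_eq_imp_space_eq[OF sN] in auto)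
  have "emeasure N (space N) = 1" using pN by (simp add: prob_space.emeasure_space_1)
  then have "emeasure M (space M) \<noteq> 0"
    using ac sN sets_eq_imp_space_eq[OF sN] unfolding absolutely_continuous_def null_sets_def by auto
  then have Mpos: "measure M (space M) > 0"
    by (simp add: emeasure_eq_measure zero_less_measure_iff)
  define Z where "Z = (\<integral>x. exp (g x) \<partial>M)"
  have "(\<integral>x. exp (- B) \<partial>M) \<le> Z" unfolding Z_def
    by (intro integral_mono intgM) (use gl in auto)
  moreover have "(\<integral>x. exp (- B) \<partial>M) = exp (- B) * measure M (space M)" by simp
  ultimately have Zpos: "Z > 0" using Mpos by (metis exp_gt_zero mult_pos_pos order_less_le_trans)
  have "(\<integral>\<^sup>+x. p x \<partial>M) = 1"
  proof -
    have "(\<integral>\<^sup>+x. p x \<partial>M) = emeasure (density M p) (space M)"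
      by (simp add: emeasure_density)
    also have "\<dots> = 1" using Nd \<open>emeasure N (space N) = 1\<close> sets_eq_imp_space_eq[OF sN] by simp
    finally show ?thesis .
  qed
  then have "AE x in M. p x \<noteq> \<infinity>"
    by (intro nn_integral_PInf_AE) auto
  then have AEfin: "AE x in N. p x \<noteq> \<infinity>"
    using absolutely_continuous_AE[OF sN ac] by blast
  have AEnz: "AE x in N. p x \<noteq> 0"
    unfolding Nd[symmetric] by (subst AE_density) auto
  have AEq: "AE x in N. 0 < enn2real (p x)"
    using AEfin AEnz by eventually_elim (auto simp: enn2real_positive_iff top.not_eq_extremum zero_less_iff_neq_zero)
  define h where "h = (\<lambda>x. exp (g x) / (Z * enn2real (p x)))"
  have hm[measurable]: "h \<in> borel_measurable N" unfolding h_def by measurable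
  have "(\<integral>\<^sup>+x. ennreal (h x) \<partial>N) = (\<integral>\<^sup>+x. p x * ennreal (h x) \<partial>M)"
    unfolding Nd[symmetric] by (subst nn_integral_density) (auto simp: h_def)
  also have "\<dots> \<le> (\<integral>\<^sup>+x. ennreal (exp (g x) / Z) \<partial>M)"
  proof (intro nn_integral_mono)
    fix x
    show "p x * ennreal (h x) \<le> ennreal (exp (g x) / Z)"
    proof (cases "p x = \<infinity>")
      case True then show ?thesis by (simp add: h_def)
    next
      case False
      then obtain r where r: "p x = ennreal r" "0 \<le> r" by (cases "p x") auto
      show ?thesis
      proof (cases "r = 0")
        case True then show ?thesis using r by simp
      next
        case False
        then have "r > 0" using r by auto
        then have "r * (exp (g x) / (Z * r)) = exp (g x) / Z" by (simp add: field_simps)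
        then show ?thesis using r \<open>r>0\<close> Zpos
          by (simp add: h_def ennreal_mult'[symmetric])
      qed
    qed
  qed
  also have "\<dots> = ennreal (\<integral>x. exp (g x) / Z \<partial>M)"
    by (intro nn_integral_eq_integral) (use intgM Zpos in auto)
  also have "(\<integral>x. exp (g x) / Z \<partial>M) = 1" using Zpos by (simp add: Z_def)
  finally have hle: "(\<integral>\<^sup>+x. ennreal (h x) \<partial>N) \<le> 1" by simp
  have hnn: "\<And>x. 0 \<le> h x" using Zpos by (simp add: h_def)
  have inth: "integrable N h"
    using hle hnn by (intro integrableI_nonneg) (auto simp: top.not_eq_extremum intro: le_less_trans)
  have "(\<integral>x. h x \<partial>N) = enn2real (\<integral>\<^sup>+x. ennreal (h x) \<partial>N)"
    by (rule integral_eq_nn_integral) (auto simp: hnn)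
  also have "\<dots> \<le> 1" using hle by (simp add: enn2real_leI)
  finally have inth1: "(\<integral>x. h x \<partial>N) \<le> 1" .
  have ed: "entropy_density (exp 1) M N = (\<lambda>x. ln (enn2real (p x)))"
    unfolding entropy_density_def p_def by (auto simp: log_ln[symmetric] o_def)
  have intl: "integrable N (\<lambda>x. ln (enn2real (p x)))" using int ed by simp
  have "(\<integral>x. g x - ln (enn2real (p x)) - ln Z \<partial>N) \<le> (\<integral>x. h x - 1 \<partial>N)"
  proof (rule integral_mono_AE)
    show "integrable N (\<lambda>x. g x - ln (enn2real (p x)) - ln Z)" using intgN intl pN
      by (intro Bochner_Integration.integrable_diff) (auto simp: prob_space.finite_measure finite_measure.integrable_const)
    show "integrable N (\<lambda>x. h x - 1)" using inth pN
      by (intro Bochner_Integration.integrable_diff) (auto simp: prob_space.finite_measure finite_measure.integrable_const)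
    show "AE x in N. g x - ln (enn2real (p x)) - ln Z \<le> h x - 1"
      using AEq
    proof eventually_elim
      case (elim x)
      have "g x - ln (enn2real (p x)) - ln Z = ln (h x)"
        using elim Zpos by (simp add: h_def ln_div ln_mult)
      also have "\<dots> \<le> h x - 1" using elim Zpos by (intro ln_le_minus_one) (simp add: h_def)
      finally show ?case .
    qed
  qed
  also have "\<dots> = (\<integral>x. h x \<partial>N) - 1" using inth pN
    by (subst Bochner_Integration.integral_diff) (auto simp: prob_space.prob_space prob_space.finite_measure finite_measure.integrable_const)
  also have "\<dots> \<le> 0" using inth1 by simp
  finally have "(\<integral>x. g x - ln (enn2real (p x)) - ln Z \<partial>N) \<le> 0" .
  moreover have "(\<integral>x. g x - ln (enn2real (p x)) - ln Z \<partial>N) = (\<integral>x. g x \<partial>N) - (\<integral>x. ln (enn2real (p x)) \<partial>N) - ln Z"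
    using intgN intl pN
    by (subst Bochner_Integration.integral_diff, auto simp: prob_space.prob_space prob_space.finite_measure finite_measure.integrable_const)
  moreover have "KL_divergence (exp 1) M N = (\<integral>x. ln (enn2real (p x)) \<partial>N)"
    unfolding KL_divergence_def ed ..
  ultimately have "(\<integral>x. g x \<partial>N) \<le> KL_divergence (exp 1) M N + ln Z" by (simp add: Z_def)
  moreover have "ln Z \<le> ln C" using Zpos ZC Z_def by simp
  ultimately show ?thesis by linarith
qed



lemma prod_nn_PiM:
  assumes fin: "finite I" and sf: "\<And>i. i \<in> I \<Longrightarrow> sigma_finite_measure (M i)"
    and fm: "\<And>i. i \<in> I \<Longrightarrow> f i \<in> borel_measurable (M i)"
  shows "(\<integral>\<^sup>+x. (\<Prod>i\<in>I. f i (x i)) \<partial>PiM I M) = (\<Prod>i\<in>I. integral\<^sup>N (M i) (f i))"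
proof -
  define M' where "M' i = (if i \<in> I then M i else count_space {})" for i
  have "sigma_finite_measure (M' i)" for i
      by (cases "i \<in> I") (auto simp: M'_def sf intro: finite_measure.sigma_finite_measure finite_measure_count_space)
  then interpret product_sigma_finite M' by (rule product_sigma_finite.intro)
  have eq: "PiM I M = PiM I M'" by (rule PiM_cong) (auto simp: M'_def)
  have "(\<integral>\<^sup>+x. (\<Prod>i\<in>I. f i (x i)) \<partial>PiM I M') = (\<Prod>i\<in>I. integral\<^sup>N (M' i) (f i))"
    by (rule product_nn_integral_prod[OF fin]) (auto simp: M'_def fm)
  then show ?thesis by (simp add: eq M'_def)
qed

definition Phi :: "nat \<Rightarrow> (nat \<Rightarrow> nat) \<Rightarrow> (nat \<Rightarrow> 'z measure) \<Rightarrow> (nat \<Rightarrow> 'f \<Rightarrow> 'z \<Rightarrow> real)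
    \<Rightarrow> (nat \<Rightarrow> 'f) \<Rightarrow> (nat \<Rightarrow> nat \<Rightarrow> 'z) \<Rightarrow> real" where
  "Phi n m D l fs S = (\<Sum>i<n. \<Sum>j<m i. ((\<integral>z. l i (fs i) z \<partial>D i) - l i (fs i) (S i j)) / (real n * real (m i)))"

lemma sample_mgf:
  fixes n :: nat and m :: "nat \<Rightarrow> nat" and F :: "'f measure" and Z :: "'z measure"
    and D :: "nat \<Rightarrow> 'z measure" and l :: "nat \<Rightarrow> 'f \<Rightarrow> 'z \<Rightarrow> real"
  assumes n_pos: "n > 0"
    and m_pos: "\<forall>i<n. m i \<ge> 1"
    and D_prob: "\<forall>i<n. prob_space (D i) \<and> sets (D i) = sets Z"
    and l_meas: "\<forall>i<n. (\<lambda>(f, z). l i f z) \<in> borel_measurable (F \<Otimes>\<^sub>M Z)"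
    and l_range: "\<forall>i<n. \<forall>f z. 0 \<le> l i f z \<and> l i f z \<le> 1"
    and fs: "\<forall>i<n. fs i \<in> space F"
    and tpos: "t > 0"
  shows "(\<integral>\<^sup>+S. ennreal (exp (t * Phi n m D l fs S)) \<partial>sample_measure n m D)
          \<le> ennreal (exp (t\<^sup>2 * (\<Sum>i<n. 1 / real (m i)) / (8 * (real n)\<^sup>2)))"
proof -
  define c where "c i = t / (real n * real (m i))" for i
  define R where "R i = (\<integral>z. l i (fs i) z \<partial>D i)" for i
  define g where "g i z = exp (c i * (R i - l i (fs i) z))" for i z
  have lm: "(\<lambda>z. l i (fs i) z) \<in> borel_measurable (D i)" if "i < n" for i
  proof -
    have "(\<lambda>z. (\<lambda>(f, z). l i f z) (fs i, z)) \<in> borel_measurable Z"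
      by (rule measurable_Pair2[OF _ fs[rule_format, OF that]]) (use l_meas that in auto)
    then show ?thesis using D_prob that measurable_cong_sets[of "D i" Z borel borel] by auto
  qed
  have gm: "g i \<in> borel_measurable (D i)" if "i < n" for i
    unfolding g_def using lm[OF that] by measurable
  have expand: "ennreal (exp (t * Phi n m D l fs S)) = (\<Prod>i<n. \<Prod>j<m i. ennreal (g i (S i j)))" for S
  proof -
    have "t * Phi n m D l fs S = (\<Sum>i<n. \<Sum>j<m i. c i * (R i - l i (fs i) (S i j)))"
      unfolding Phi_def c_def R_def by (simp add: sum_distrib_left)
    then have "exp (t * Phi n m D l fs S) = (\<Prod>i<n. \<Prod>j<m i. g i (S i j))"
      by (simp add: exp_sum g_def)
    then show ?thesis by (simp add: prod_ennreal prod_nonneg g_def)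
  qed
  have inner: "(\<integral>\<^sup>+s. (\<Prod>j<m i. ennreal (g i (s j))) \<partial>PiM {..<m i} (\<lambda>j. D i))
      \<le> ennreal (exp (real (m i) * (c i)\<^sup>2 / 8))" if i: "i < n" for i
  proof -
    interpret Di: prob_space "D i" using D_prob i by auto
    have "(\<integral>\<^sup>+s. (\<Prod>j<m i. ennreal (g i (s j))) \<partial>PiM {..<m i} (\<lambda>j. D i))
        = (\<Prod>j<m i. \<integral>\<^sup>+z. ennreal (g i z) \<partial>D i)"
      using gm[OF i] by (intro prod_nn_PiM) (auto intro: Di.sigma_finite_measure)
    also have "\<dots> \<le> (\<Prod>j<m i. ennreal (exp ((c i)\<^sup>2 / 8)))"
    proof (intro prod_mono_ennreal)
      fix j
      interpret interval_bounded_random_variable "D i" "\<lambda>z. - l i (fs i) z" "-1" 0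
        by unfold_locales (use lm[OF i] l_range i in auto)
      have cpos: "c i > 0" using tpos n_pos m_pos i by (auto simp: c_def)
      have "(\<integral>\<^sup>+z. ennreal (exp (c i * (- l i (fs i) z - Di.expectation (\<lambda>z. - l i (fs i) z)))) \<partial>D i)
            \<le> ennreal (exp ((c i)\<^sup>2 * (0 - -1)\<^sup>2 / 8))"
        by (rule Hoeffdings_lemma_nn_integral[OF cpos])
      then show "(\<integral>\<^sup>+z. ennreal (g i z) \<partial>D i) \<le> ennreal (exp ((c i)\<^sup>2 / 8))"
        by (simp add: g_def R_def algebra_simps)
    qed
    also have "\<dots> = ennreal (exp (real (m i) * (c i)\<^sup>2 / 8))"
      proof -
      have "exp (real (m i) * (c i)\<^sup>2 / 8) = exp ((c i)\<^sup>2 / 8) ^ m i"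
        by (metis exp_of_nat_mult times_divide_eq_right)
      moreover have "(\<Prod>j<m i. ennreal (exp ((c i)\<^sup>2 / 8))) = ennreal (\<Prod>j<m i. exp ((c i)\<^sup>2 / 8))"
        by (rule prod_ennreal) auto
      ultimately show ?thesis by simp
    qed
    finally show ?thesis .
  qed
  have "(\<integral>\<^sup>+S. ennreal (exp (t * Phi n m D l fs S)) \<partial>sample_measure n m D)
      = (\<integral>\<^sup>+S. (\<Prod>i<n. \<Prod>j<m i. ennreal (g i (S i j))) \<partial>sample_measure n m D)"
    by (simp add: expand)
  also have "\<dots> = (\<Prod>i<n. \<integral>\<^sup>+s. (\<Prod>j<m i. ennreal (g i (s j))) \<partial>PiM {..<m i} (\<lambda>j. D i))"
    unfolding sample_measure_def
  proof (rule prod_nn_PiM)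
    fix i assume i: "i \<in> {..<n}"
    interpret Di: prob_space "D i" using D_prob i by auto
    show "sigma_finite_measure (PiM {..<m i} (\<lambda>j. D i))"
      by (intro prob_space_imp_sigma_finite prob_space_PiM) (rule Di.prob_space_axioms)
    show "(\<lambda>s. \<Prod>j<m i. ennreal (g i (s j))) \<in> borel_measurable (PiM {..<m i} (\<lambda>j. D i))"
    proof (intro borel_measurable_prod_ennreal measurable_compose[OF _ measurable_ennreal])
      fix j assume "j \<in> {..<m i}"
      then show "(\<lambda>s. g i (s j)) \<in> borel_measurable (PiM {..<m i} (\<lambda>j. D i))"
        using gm i by (intro measurable_compose[OF measurable_component_singleton]) auto
    qed
  qed auto
  also have "\<dots> \<le> (\<Prod>i<n. ennreal (exp (real (m i) * (c i)\<^sup>2 / 8)))"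
    by (intro prod_mono_ennreal inner) auto
  also have "\<dots> = ennreal (exp (\<Sum>i<n. real (m i) * (c i)\<^sup>2 / 8))"
    by (simp add: prod_ennreal exp_sum)
  also have "(\<Sum>i<n. real (m i) * (c i)\<^sup>2 / 8) = t\<^sup>2 * (\<Sum>i<n. 1 / real (m i)) / (8 * (real n)\<^sup>2)"
  proof -
    have "real (m i) * (c i)\<^sup>2 / 8 = t\<^sup>2 * (1 / real (m i)) / (8 * (real n)\<^sup>2)" if "i < n" for i
      using m_pos that n_pos by (simp add: c_def power2_eq_square field_simps)
    then have "(\<Sum>i<n. real (m i) * (c i)\<^sup>2 / 8) = (\<Sum>i<n. t\<^sup>2 * (1 / real (m i)) / (8 * (real n)\<^sup>2))"
      by (intro sum.cong) auto
    then show ?thesis by (simp only: sum_divide_distrib[symmetric] sum_distrib_left[symmetric])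
  qed
  finally show ?thesis .
qed



lemma Phi_meas:
  fixes n :: nat and m :: "nat \<Rightarrow> nat" and F :: "'f measure" and Z :: "'z measure"
    and D :: "nat \<Rightarrow> 'z measure" and l :: "nat \<Rightarrow> 'f \<Rightarrow> 'z \<Rightarrow> real"
  assumes D_prob: "\<forall>i<n. prob_space (D i) \<and> sets (D i) = sets Z"
    and l_meas: "\<forall>i<n. (\<lambda>(f, z). l i f z) \<in> borel_measurable (F \<Otimes>\<^sub>M Z)"
  shows "(\<lambda>(S, fs). Phi n m D l fs S) \<in> borel_measurable (sample_measure n m D \<Otimes>\<^sub>M PiM {..<n} (\<lambda>_. F))"
proof -
  let ?SM = "sample_measure n m D" and ?PF = "PiM {..<n} (\<lambda>_. F)"
  have trm: "(\<lambda>(S, fs). ((\<integral>z. l i (fs i) z \<partial>D i) - l i (fs i) (S i j)) / (real n * real (m i)))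
      \<in> borel_measurable (?SM \<Otimes>\<^sub>M ?PF)" if i: "i < n" and j: "j < m i" for i j
  proof -
    interpret Di: prob_space "D i" using D_prob i by auto
    have iI: "i \<in> {..<n}" using i by simp
    have sD: "sets (D i) = sets Z" using D_prob i by auto
    have lZ[measurable]: "(\<lambda>(f, z). l i f z) \<in> borel_measurable (F \<Otimes>\<^sub>M Z)" using l_meas i by auto
    have lD[measurable]: "(\<lambda>(f, z). l i f z) \<in> borel_measurable (F \<Otimes>\<^sub>M D i)"
      using lZ measurable_cong_sets[OF sets_pair_measure_cong[OF refl sD] refl] by blast
    have c1: "(\<lambda>x. (fst x i, snd x)) \<in> measurable (?PF \<Otimes>\<^sub>M D i) (F \<Otimes>\<^sub>M D i)"
      using iI by measurable
    have "(\<lambda>x. (\<lambda>(f, z). l i f z) (fst x i, snd x)) \<in> borel_measurable (?PF \<Otimes>\<^sub>M D i)"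
      by (rule measurable_compose[OF c1 lD])
    then have "case_prod (\<lambda>fs z. l i (fs i) z) \<in> borel_measurable (?PF \<Otimes>\<^sub>M D i)"
      by (simp add: case_prod_beta')
    then have Rm: "(\<lambda>fs. \<integral>z. l i (fs i) z \<partial>D i) \<in> borel_measurable ?PF"
      by (rule Di.borel_measurable_lebesgue_integral)
    have Sij: "(\<lambda>S. S i j) \<in> measurable ?SM (D i)"
      unfolding sample_measure_def
      by (rule measurable_compose[OF measurable_component_singleton[OF iI] measurable_component_singleton]) (use j in simp)
    have SijZ: "(\<lambda>S. S i j) \<in> measurable ?SM Z"
      using Sij measurable_cong_sets[OF refl sD] by blast
    have c2: "(\<lambda>x. (snd x i, fst x i j)) \<in> measurable (?SM \<Otimes>\<^sub>M ?PF) (F \<Otimes>\<^sub>M Z)"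
      using iI SijZ by measurable
    have "(\<lambda>x. (\<lambda>(f, z). l i f z) (snd x i, fst x i j)) \<in> borel_measurable (?SM \<Otimes>\<^sub>M ?PF)"
      by (rule measurable_compose[OF c2 lZ])
    then have lm2: "(\<lambda>x. l i (snd x i) (fst x i j)) \<in> borel_measurable (?SM \<Otimes>\<^sub>M ?PF)" by simp
    have Rm2: "(\<lambda>x. \<integral>z. l i (snd x i) z \<partial>D i) \<in> borel_measurable (?SM \<Otimes>\<^sub>M ?PF)"
      by (rule measurable_compose[OF measurable_snd Rm])
    show ?thesis
      unfolding case_prod_beta' using lm2 Rm2 by measurable
  qed
  show ?thesis
    unfolding Phi_def case_prod_beta'
    by (intro borel_measurable_sum) (use trm in \<open>auto simp: case_prod_beta'\<close>)
qed



lemma lD_meas: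
  assumes "sets Di = sets Z" "(\<lambda>(f, z). l f z) \<in> borel_measurable (F \<Otimes>\<^sub>M Z)"
  shows "(\<lambda>(f, z). l f z) \<in> borel_measurable (F \<Otimes>\<^sub>M Di)"
  using assms(2) by (simp only: measurable_cong_sets[OF sets_pair_measure_cong[OF refl assms(1)] refl])

lemma l_sec_meas:
  assumes "sets Di = sets Z" "(\<lambda>(f, z). l f z) \<in> borel_measurable (F \<Otimes>\<^sub>M Z)" "f \<in> space F"
  shows "(\<lambda>z. l f z) \<in> borel_measurable Di"
proof -
  have "(\<lambda>z. (\<lambda>(f, z). l f z) (f, z)) \<in> borel_measurable Di"
    by (rule measurable_Pair2[OF lD_meas[OF assms(1,2)] assms(3)])
  then show ?thesis by simp
qed

lemma l_sec_meas1:
  assumes "sets Qi = sets F" "(\<lambda>(f, z). l f z) \<in> borel_measurable (F \<Otimes>\<^sub>M Z)" "z \<in> space Z"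
  shows "(\<lambda>f. l f z) \<in> borel_measurable Qi"
proof -
  have "(\<lambda>f. (\<lambda>(f, z). l f z) (f, z)) \<in> borel_measurable F"
    by (rule measurable_Pair1[OF assms(2) assms(3)])
  then show ?thesis by (simp add: measurable_cong_sets[OF assms(1) refl])
qed

lemma R_bound:
  fixes l :: "'f \<Rightarrow> 'z \<Rightarrow> real"
  assumes Di: "prob_space Di" "sets Di = sets Z"
    and lm: "(\<lambda>(f, z). l f z) \<in> borel_measurable (F \<Otimes>\<^sub>M Z)"
    and lr: "\<forall>f z. 0 \<le> l f z \<and> l f z \<le> 1" and f: "f \<in> space F"
  shows "0 \<le> (\<integral>z. l f z \<partial>Di) \<and> (\<integral>z. l f z \<partial>Di) \<le> 1"
proof -
  interpret prob_space Di by (rule Di(1))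
  have m: "(\<lambda>z. l f z) \<in> borel_measurable Di" by (rule l_sec_meas[OF Di(2) lm f])
  have int: "integrable Di (\<lambda>z. l f z)"
    by (rule finite_measure.integrable_const_bound[where B=1, OF prob_space.finite_measure[OF Di(1)]]) (use lr m in simp_all)
  have lr1: "l f z \<le> 1" for z using lr by simp
  have "(\<integral>z. l f z \<partial>Di) \<le> (\<integral>z. 1 \<partial>Di)" by (rule integral_mono[OF int integrable_const]) (rule lr1)
  moreover have "0 \<le> (\<integral>z. l f z \<partial>Di)" by (intro integral_nonneg_AE AE_I2) (use lr in simp)
  ultimately show ?thesis by (simp add: prob_space)
qed

lemma term_bound:
  fixes a b c :: real
  assumes "0 \<le> a" "a \<le> 1" "0 \<le> b" "b \<le> 1" "c > 0"
  shows "\<bar>(a - b) / c\<bar> \<le> 1 / c"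
proof -
  have "\<bar>a - b\<bar> \<le> 1" using assms by linarith
  moreover have "\<bar>(a - b) / c\<bar> = \<bar>a - b\<bar> / c" using assms(5) by simp
  ultimately show ?thesis using assms(5) by (simp add: divide_right_mono)
qed

lemma Phi_bound:
  fixes n :: nat and m :: "nat \<Rightarrow> nat" and F :: "'f measure" and Z :: "'z measure"
    and D :: "nat \<Rightarrow> 'z measure" and l :: "nat \<Rightarrow> 'f \<Rightarrow> 'z \<Rightarrow> real"
  assumes n_pos: "n > 0"
    and m_pos: "\<forall>i<n. m i \<ge> 1"
    and D_prob: "\<forall>i<n. prob_space (D i) \<and> sets (D i) = sets Z"
    and l_meas: "\<forall>i<n. (\<lambda>(f, z). l i f z) \<in> borel_measurable (F \<Otimes>\<^sub>M Z)"
    and l_range: "\<forall>i<n. \<forall>f z. 0 \<le> l i f z \<and> l i f z \<le> 1"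
    and fs: "\<forall>i<n. fs i \<in> space F"
  shows "\<bar>Phi n m D l fs S\<bar> \<le> 1"
proof -
  have "\<bar>Phi n m D l fs S\<bar> \<le> (\<Sum>i<n. \<Sum>j<m i. \<bar>((\<integral>z. l i (fs i) z \<partial>D i) - l i (fs i) (S i j)) / (real n * real (m i))\<bar>)"
    unfolding Phi_def by (rule order.trans[OF sum_abs sum_mono]) (rule sum_abs)
  also have "\<dots> \<le> (\<Sum>i<n. \<Sum>j<m i. 1 / (real n * real (m i)))"
  proof (intro sum_mono)
    fix i j assume i: "i \<in> {..<n}" and j: "j \<in> {..<m i}"
    have "0 \<le> (\<integral>z. l i (fs i) z \<partial>D i) \<and> (\<integral>z. l i (fs i) z \<partial>D i) \<le> 1"
      using D_prob l_meas l_range fs i by (intro R_bound[where Z=Z and F=F]) auto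
    moreover have "0 \<le> l i (fs i) (S i j) \<and> l i (fs i) (S i j) \<le> 1" using l_range i by auto
    moreover have "m i \<ge> 1" using m_pos i by simp
    then have "real n * real (m i) > 0" using n_pos by simp
    ultimately show "\<bar>((\<integral>z. l i (fs i) z \<partial>D i) - l i (fs i) (S i j)) / (real n * real (m i))\<bar> \<le> 1 / (real n * real (m i))"
      by (intro term_bound) auto
  qed
  also have "\<dots> = (\<Sum>i<n. 1 / real n)"
  proof (intro sum.cong refl)
    fix i assume "i \<in> {..<n}"
    then have "m i \<ge> 1" using m_pos by simp
    then have "real (m i) > 0" by simp
    then show "(\<Sum>j<m i. 1 / (real n * real (m i))) = 1 / real n" by simp
  qed
  also have "\<dots> = 1" using n_pos by simp
  finally show ?thesis .
qed

lemma int_snd_comp: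
  fixes f :: "'a \<Rightarrow> real"
  assumes M1: "prob_space M1" and M: "\<And>i. i \<in> I \<Longrightarrow> prob_space (M i)" and i: "i \<in> I"
    and fm: "f \<in> borel_measurable (M i)" and fb: "\<And>x. \<bar>f x\<bar> \<le> B"
  shows "(\<integral>x. f (snd x i) \<partial>(M1 \<Otimes>\<^sub>M PiM I M)) = (\<integral>y. f y \<partial>M i)"
proof -
  interpret P: prob_space "PiM I M" using M by (intro prob_space_PiM) auto
  interpret M1: prob_space M1 by (rule M1)
  interpret pair_sigma_finite M1 "PiM I M" by unfold_locales
  interpret PP: prob_space "M1 \<Otimes>\<^sub>M PiM I M" by (intro prob_space_pair M1 P.prob_space_axioms)
  have cm: "(\<lambda>y. y i) \<in> measurable (PiM I M) (M i)" using i by simp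
  have fm2: "(\<lambda>y. f (y i)) \<in> borel_measurable (PiM I M)" by (rule measurable_compose[OF cm fm])
  have intf: "integrable (M1 \<Otimes>\<^sub>M PiM I M) (\<lambda>x. f (snd x i))"
  proof (rule PP.integrable_const_bound[where B=B])
    show "(\<lambda>x. f (snd x i)) \<in> borel_measurable (M1 \<Otimes>\<^sub>M PiM I M)"
      using measurable_compose[OF measurable_snd fm2, of M1] by simp
    show "AE x in M1 \<Otimes>\<^sub>M PiM I M. norm (f (snd x i)) \<le> B" using fb by simp
  qed
  then have "(\<integral>x. (\<integral>y. f (y i) \<partial>PiM I M) \<partial>M1) = (\<integral>x. f (snd x i) \<partial>(M1 \<Otimes>\<^sub>M PiM I M))"
    using integral_fst'[OF intf] by (simp only: snd_conv)
  moreover have "(\<integral>y. f (y i) \<partial>PiM I M) = (\<integral>y. f y \<partial>M i)"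
  proof -
    have "(\<integral>y. f y \<partial>M i) = (\<integral>y. f y \<partial>distr (PiM I M) (M i) (\<lambda>y. y i))"
      using distr_PiM_component[of I M i] M i by simp
    also have "\<dots> = (\<integral>y. f (y i) \<partial>PiM I M)" by (rule integral_distr[OF cm fm])
    finally show ?thesis by simp
  qed
  ultimately show ?thesis by (simp add: M1.prob_space)
qed



lemma R_bound_all:
  fixes l :: "'f \<Rightarrow> 'z \<Rightarrow> real"
  assumes Di: "prob_space Di" and lr: "\<forall>f z. 0 \<le> l f z \<and> l f z \<le> 1"
  shows "\<bar>\<integral>z. l f z \<partial>Di\<bar> \<le> 1"
proof (cases "integrable Di (l f)")
  case True
  interpret prob_space Di by (rule Di)
  have lr1: "l f z \<le> 1" for z using lr by simp
  have "(\<integral>z. l f z \<partial>Di) \<le> (\<integral>z. 1 \<partial>Di)" by (rule integral_mono[OF True integrable_const]) (rule lr1)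
  moreover have "0 \<le> (\<integral>z. l f z \<partial>Di)" by (intro integral_nonneg_AE AE_I2) (use lr in simp)
  ultimately show ?thesis by (simp add: prob_space)
next
  case False then show ?thesis by (simp add: not_integrable_integral_eq)
qed

lemma int_snd_integrable:
  fixes f :: "'a \<Rightarrow> real"
  assumes M1: "prob_space M1" and M: "\<And>i. i \<in> I \<Longrightarrow> prob_space (M i)" and i: "i \<in> I"
    and fm: "f \<in> borel_measurable (M i)" and fb: "\<And>x. \<bar>f x\<bar> \<le> B"
  shows "integrable (M1 \<Otimes>\<^sub>M PiM I M) (\<lambda>x. f (snd x i))"
proof -
  interpret P: prob_space "PiM I M" using M by (intro prob_space_PiM) auto
  interpret PP: prob_space "M1 \<Otimes>\<^sub>M PiM I M" by (intro prob_space_pair M1 P.prob_space_axioms)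
  have cm: "(\<lambda>y. y i) \<in> measurable (PiM I M) (M i)" using i by simp
  have fm2: "(\<lambda>y. f (y i)) \<in> borel_measurable (PiM I M)" by (rule measurable_compose[OF cm fm])
  show ?thesis
  proof (rule PP.integrable_const_bound[where B=B])
    show "(\<lambda>x. f (snd x i)) \<in> borel_measurable (M1 \<Otimes>\<^sub>M PiM I M)"
      using measurable_compose[OF measurable_snd fm2, of M1] by simp
    show "AE x in M1 \<Otimes>\<^sub>M PiM I M. norm (f (snd x i)) \<le> B" using fb by simp
  qed
qed

lemma risk_identity:
  fixes n :: nat and m :: "nat \<Rightarrow> nat" and F :: "'f measure" and Z :: "'z measure"
    and D :: "nat \<Rightarrow> 'z measure" and l :: "nat \<Rightarrow> 'f \<Rightarrow> 'z \<Rightarrow> real"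
  assumes n_pos: "n > 0"
    and m_pos: "\<forall>i<n. m i \<ge> 1"
    and D_prob: "\<forall>i<n. prob_space (D i) \<and> sets (D i) = sets Z"
    and l_meas: "\<forall>i<n. (\<lambda>(f, z). l i f z) \<in> borel_measurable (F \<Otimes>\<^sub>M Z)"
    and l_range: "\<forall>i<n. \<forall>f z. 0 \<le> l i f z \<and> l i f z \<le> 1"
    and HQ: "prob_space HQ"
    and Q: "\<forall>i<n. prob_space (Q i) \<and> sets (Q i) = sets F"
    and S: "\<forall>i<n. \<forall>j<m i. S i j \<in> space Z"
  shows "(\<integral>x. Phi n m D l (snd x) S \<partial>hyper_post_joint n HQ Q)
     = (1 / real n) * (\<Sum>i<n. true_risk (D i) (l i) (Q i)) - (1 / real n) * (\<Sum>i<n. emp_risk (m i) (l i) (Q i) (S i))"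
proof -
  let ?QQ = "HQ \<Otimes>\<^sub>M PiM {..<n} Q"
  define R where "R i f = (\<integral>z. l i f z \<partial>D i)" for i f
  have Qp: "\<And>i. i \<in> {..<n} \<Longrightarrow> prob_space (Q i)" using Q by auto
  have Rb: "\<bar>R i f\<bar> \<le> 1" if "i < n" for i f
    unfolding R_def by (rule R_bound_all) (use D_prob l_range that in simp_all)
  have lb: "\<bar>l i f z\<bar> \<le> 1" if "i < n" for i f z
    using l_range[rule_format, OF that, of f z] by (simp add: abs_le_iff)
  have Rm: "R i \<in> borel_measurable (Q i)" if i: "i < n" for i
  proof -
    interpret Di: prob_space "D i" using D_prob i by simp
    have sQ: "sets (Q i) = sets F" using Q i by simp
    have "(\<lambda>(f, z). l i f z) \<in> borel_measurable (F \<Otimes>\<^sub>M D i)"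
      by (rule lD_meas[where Z=Z]) (use D_prob l_meas i in simp_all)
    then have "case_prod (\<lambda>f z. l i f z) \<in> borel_measurable (Q i \<Otimes>\<^sub>M D i)"
      by (simp only: measurable_cong_sets[OF sets_pair_measure_cong[OF sQ refl] refl])
    then show ?thesis unfolding R_def by (rule Di.borel_measurable_lebesgue_integral)
  qed
  have lm: "(\<lambda>f. l i f (S i j)) \<in> borel_measurable (Q i)" if i: "i < n" and j: "j < m i" for i j
    by (rule l_sec_meas1[where Z=Z and F=F]) (use Q l_meas S i j in simp_all)
  have intR: "integrable ?QQ (\<lambda>x. R i (snd x i))" if "i < n" for i
    by (rule int_snd_integrable[where f="R i" and i=i and I="{..<n}" and M=Q and B=1, OF HQ Qp _ Rm[OF that] Rb[OF that]]) (use that in simp_all)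
  have intl: "integrable ?QQ (\<lambda>x. l i (snd x i) (S i j))" if "i < n" "j < m i" for i j
    by (rule int_snd_integrable[where f="\<lambda>f. l i f (S i j)" and i=i and I="{..<n}" and M=Q and B=1, OF HQ Qp _ lm[OF that] lb[OF that(1)]]) (use that in simp_all)
  have TR: "(\<integral>f. R i f \<partial>Q i) = true_risk (D i) (l i) (Q i)" if i: "i < n" for i
  proof -
    interpret Di: prob_space "D i" using D_prob i by simp
    interpret Qi: prob_space "Q i" using Q i by simp
    have sQ: "sets (Q i) = sets F" using Q i by simp
    interpret pair_sigma_finite "Q i" "D i" by unfold_locales
    interpret QD: prob_space "Q i \<Otimes>\<^sub>M D i" by (intro prob_space_pair Qi.prob_space_axioms Di.prob_space_axioms)
    have "(\<lambda>(f, z). l i f z) \<in> borel_measurable (F \<Otimes>\<^sub>M D i)"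
      by (rule lD_meas[where Z=Z]) (use D_prob l_meas i in simp_all)
    then have m2: "case_prod (l i) \<in> borel_measurable (Q i \<Otimes>\<^sub>M D i)"
      by (simp only: measurable_cong_sets[OF sets_pair_measure_cong[OF sQ refl] refl] case_prod_eta)
    have "integrable (Q i \<Otimes>\<^sub>M D i) (case_prod (l i))"
    proof (rule QD.integrable_const_bound[where B=1])
      show "AE x in Q i \<Otimes>\<^sub>M D i. norm (case_prod (l i) x) \<le> 1"
        by (intro AE_I2) (simp add: case_prod_beta lb[OF i])
    qed (rule m2)
    from Fubini_integral[OF this] show ?thesis
      unfolding true_risk_def gibbs_loss_def R_def by simp
  qed
  have "(\<integral>x. Phi n m D l (snd x) S \<partial>hyper_post_joint n HQ Q)
      = (\<integral>x. (\<Sum>i<n. \<Sum>j<m i. (R i (snd x i) - l i (snd x i) (S i j)) / (real n * real (m i))) \<partial>?QQ)"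
    unfolding hyper_post_joint_def Phi_def R_def ..
  also have "\<dots> = (\<Sum>i<n. \<Sum>j<m i. (\<integral>x. (R i (snd x i) - l i (snd x i) (S i j)) / (real n * real (m i)) \<partial>?QQ))"
  proof -
    have it: "integrable ?QQ (\<lambda>x. (R i (snd x i) - l i (snd x i) (S i j)) / (real n * real (m i)))"
      if "i \<in> {..<n}" "j \<in> {..<m i}" for i j
      using intR[of i] intl[of i j] that by simp
    have "(\<integral>x. (\<Sum>i<n. \<Sum>j<m i. (R i (snd x i) - l i (snd x i) (S i j)) / (real n * real (m i))) \<partial>?QQ)
       = (\<Sum>i<n. (\<integral>x. (\<Sum>j<m i. (R i (snd x i) - l i (snd x i) (S i j)) / (real n * real (m i))) \<partial>?QQ))"
      by (rule Bochner_Integration.integral_sum) (rule Bochner_Integration.integrable_sum, rule it)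
    also have "\<dots> = (\<Sum>i<n. \<Sum>j<m i. (\<integral>x. (R i (snd x i) - l i (snd x i) (S i j)) / (real n * real (m i)) \<partial>?QQ))"
      by (intro sum.cong refl Bochner_Integration.integral_sum it)
    finally show ?thesis .
  qed
  also have "\<dots> = (\<Sum>i<n. \<Sum>j<m i. (true_risk (D i) (l i) (Q i) - gibbs_loss (l i) (Q i) (S i j)) / (real n * real (m i)))"
  proof (intro sum.cong refl)
    fix i j assume i: "i \<in> {..<n}" and j: "j \<in> {..<m i}"
    have "(\<integral>x. (R i (snd x i) - l i (snd x i) (S i j)) / (real n * real (m i)) \<partial>?QQ)
        = ((\<integral>x. R i (snd x i) \<partial>?QQ) - (\<integral>x. l i (snd x i) (S i j) \<partial>?QQ)) / (real n * real (m i))"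
      using intR intl i j by (simp add: Bochner_Integration.integral_diff)
    also have "(\<integral>x. R i (snd x i) \<partial>?QQ) = (\<integral>f. R i f \<partial>Q i)"
      by (rule int_snd_comp[where f="R i" and i=i and I="{..<n}" and M=Q and B=1, OF HQ Qp i Rm Rb]) (use i in simp_all)
    also have "(\<integral>x. l i (snd x i) (S i j) \<partial>?QQ) = (\<integral>f. l i f (S i j) \<partial>Q i)"
      by (rule int_snd_comp[where f="\<lambda>f. l i f (S i j)" and i=i and I="{..<n}" and M=Q and B=1, OF HQ Qp i lm lb]) (use i j in simp_all)
    finally show "(\<integral>x. (R i (snd x i) - l i (snd x i) (S i j)) / (real n * real (m i)) \<partial>?QQ)
        = (true_risk (D i) (l i) (Q i) - gibbs_loss (l i) (Q i) (S i j)) / (real n * real (m i))"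
      using TR i by (simp add: gibbs_loss_def)
  qed
  also have "\<dots> = (\<Sum>i<n. true_risk (D i) (l i) (Q i) / real n - emp_risk (m i) (l i) (Q i) (S i) / real n)"
  proof (intro sum.cong refl)
    fix i assume i: "i \<in> {..<n}"
    then have mi: "real (m i) > 0" using m_pos by (simp add: Suc_le_eq)
    have "(\<Sum>j<m i. (true_risk (D i) (l i) (Q i) - gibbs_loss (l i) (Q i) (S i j)) / (real n * real (m i)))
        = real (m i) * true_risk (D i) (l i) (Q i) / (real n * real (m i))
          - (\<Sum>j<m i. gibbs_loss (l i) (Q i) (S i j)) / (real n * real (m i))"
      by (simp add: sum_subtractf sum_divide_distrib[symmetric] diff_divide_distrib)
    also have "\<dots> = true_risk (D i) (l i) (Q i) / real n - emp_risk (m i) (l i) (Q i) (S i) / real n"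
      using mi by (simp add: emp_risk_def field_simps)
    finally show "(\<Sum>j<m i. (true_risk (D i) (l i) (Q i) - gibbs_loss (l i) (Q i) (S i j)) / (real n * real (m i)))
        = true_risk (D i) (l i) (Q i) / real n - emp_risk (m i) (l i) (Q i) (S i) / real n" .
  qed
  also have "\<dots> = (1 / real n) * (\<Sum>i<n. true_risk (D i) (l i) (Q i)) - (1 / real n) * (\<Sum>i<n. emp_risk (m i) (l i) (Q i) (S i))"
    by (simp add: sum_subtractf sum_divide_distrib[symmetric])
  finally show ?thesis .
qed



lemma grid_arith:
  fixes Nn \<delta> K d :: real and M :: nat
  assumes Nn: "Nn \<ge> 1" and \<delta>: "0 < \<delta>" "\<delta> < 1" and K: "K \<ge> 0" and d1: "d \<le> 1"
    and M: "M = nat \<lceil>2 * Nn\<rceil>"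
    and H: "\<And>k. 1 \<le> k \<Longrightarrow> k \<le> M \<Longrightarrow> sqrt (8 * Nn * real k) * d \<le> K + real k + ln (real M / \<delta>)"
  shows "d \<le> sqrt ((K + ln (4 * Nn / \<delta>) + 1) / (2 * Nn))"
proof (cases "K + ln (4 * Nn / \<delta>) + 1 \<ge> 2 * Nn")
  case True
  then have "1 \<le> (K + ln (4 * Nn / \<delta>) + 1) / (2 * Nn)" using Nn by simp
  then have "1 \<le> sqrt ((K + ln (4 * Nn / \<delta>) + 1) / (2 * Nn))" by (simp only: real_sqrt_ge_1_iff)
  then show ?thesis using d1 by linarith
next
  case False
  define B where "B = K + ln (4 * Nn / \<delta>) + 1"
  have B: "B < 2 * Nn" using False B_def by simp
  have c0: "\<lceil>2 * Nn\<rceil> \<ge> 0" using Nn by simp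
  have RM: "real M = of_int \<lceil>2 * Nn\<rceil>" using M c0 by simp
  have M1: "real M \<ge> 2 * Nn" using RM by (simp add: le_of_int_ceiling)
  have M2: "real M \<le> 4 * Nn" using RM Nn of_int_ceiling_le_add_one[of "2 * Nn"] by linarith
  have Mpos: "real M > 0" using M1 Nn by linarith
  define t where "t = K + ln (real M / \<delta>)"
  have "real M / \<delta> > 1" using M1 Nn \<delta> by (simp add: field_simps)
  then have "ln (real M / \<delta>) > 0" by simp
  then have tpos: "t > 0" using K t_def by simp
  have "ln (real M / \<delta>) \<le> ln (4 * Nn / \<delta>)"
    using M2 Mpos \<delta> by (simp add: divide_right_mono)
  then have tB: "t + 1 \<le> B" unfolding t_def B_def by simp
  define k where "k = nat \<lceil>t\<rceil>"
  have c1: "\<lceil>t\<rceil> \<ge> 1" using tpos by (simp add: one_le_ceiling)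
  have Rk: "real k = of_int \<lceil>t\<rceil>" unfolding k_def using c1 by simp
  have k1: "real k \<ge> t" using Rk by (simp add: le_of_int_ceiling)
  have k2: "real k < t + 1" using Rk of_int_ceiling_diff_one_le[of t] by linarith
  have kge1: "1 \<le> k" unfolding k_def using c1 by linarith
  have "real k \<le> real M" using k2 tB B M1 by linarith
  then have kleM: "k \<le> M" by simp
  have Hk: "sqrt (8 * Nn * real k) * d \<le> t + real k" using H[OF kge1 kleM] t_def by simp
  show ?thesis
  proof (cases "d \<le> 0")
    case True
    have "ln (4 * Nn / \<delta>) \<ge> 0" using Nn \<delta> by (simp add: field_simps)
    then have "0 \<le> (K + ln (4 * Nn / \<delta>) + 1) / (2 * Nn)" using K Nn by simp
    then have "0 \<le> sqrt ((K + ln (4 * Nn / \<delta>) + 1) / (2 * Nn))" by simp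
    then show ?thesis using True by linarith
  next
    case False
    then have dpos: "d > 0" by simp
    have kpos: "real k > 0" using kge1 by simp
    have s2: "(sqrt (8 * Nn * real k))\<^sup>2 = 8 * Nn * real k" using Nn kpos by simp
    have "(sqrt (8 * Nn * real k) * d)\<^sup>2 \<le> (t + real k)\<^sup>2"
      using Hk dpos Nn kpos by (intro power_mono) simp_all
    then have A: "8 * Nn * real k * d\<^sup>2 \<le> (t + real k)\<^sup>2" by (simp add: power_mult_distrib s2)
    have "(real k - t)\<^sup>2 \<le> 1" using k1 k2 by (simp add: power2_eq_square) (smt (verit) mult_le_one)
    then have "(t + real k)\<^sup>2 \<le> 4 * real k * (t + 1)" using kge1 by (simp add: power2_eq_square algebra_simps)
    with A have "8 * Nn * real k * d\<^sup>2 \<le> 4 * real k * (t + 1)" by linarith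
    then have "real k * (8 * Nn * d\<^sup>2) \<le> real k * (4 * (t + 1))" by (simp add: algebra_simps)
    then have "8 * Nn * d\<^sup>2 \<le> 4 * (t + 1)" using kpos by simp
    then have "d\<^sup>2 \<le> (t + 1) / (2 * Nn)" using Nn by (simp add: field_simps)
    also have "\<dots> \<le> B / (2 * Nn)" using tB Nn by (simp add: divide_right_mono)
    finally show ?thesis unfolding B_def by (rule real_le_rsqrt)
  qed
qed


theorem theorem3:
  fixes n :: nat and m :: "nat \<Rightarrow> nat"
    and F :: "'f measure" and Z :: "'z measure"
    and D :: "nat \<Rightarrow> 'z measure" and l :: "nat \<Rightarrow> 'f \<Rightarrow> 'z \<Rightarrow> real"
    and HP :: "'f measure measure" and \<delta> :: real
  assumes n_pos: "n > 0"
    and m_pos: "\<forall>i<n. m i \<ge> 1"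
    and D_prob: "\<forall>i<n. prob_space (D i) \<and> sets (D i) = sets Z"
    and l_meas: "\<forall>i<n. (\<lambda>(f, z). l i f z) \<in> borel_measurable (F \<Otimes>\<^sub>M Z)"
    and l_range: "\<forall>i<n. \<forall>f z. 0 \<le> l i f z \<and> l i f z \<le> 1"
    and HP_prob: "prob_space HP" "sets HP = sets (prob_algebra F)"
    and \<delta>_pos: "\<delta> > 0"
  shows "\<exists>E \<in> sets (sample_measure n m D).
     measure (sample_measure n m D) E \<ge> 1 - \<delta> \<and>
     (\<forall>S \<in> E. \<forall>HQ Q.
        prob_space HQ \<and> sets HQ = sets (prob_algebra F) \<and>
        (\<forall>i<n. prob_space (Q i) \<and> sets (Q i) = sets F) \<longrightarrow>
        (let mh = real n / (\<Sum>i<n. 1 / real (m i));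
             KL = kl_div (hyper_post_joint n HQ Q) (hyper_prior_joint n F HP)
         in ereal ((1 / real n) * (\<Sum>i<n. true_risk (D i) (l i) (Q i)))
            \<le> ereal ((1 / real n) * (\<Sum>i<n. emp_risk (m i) (l i) (Q i) (S i)))
               + sqrt_ext ((KL + ereal (ln (4 * mh * real n / \<delta>)) + 1) / ereal (2 * mh * real n))))"
proof (cases "\<delta> \<ge> 1")
  case True
  show ?thesis
    by (rule bexI[of _ "{}"]) (use True in auto)
next
  case False
  then have \<delta>1: "\<delta> < 1" by simp
  define SM where "SM = sample_measure n m D"
  define PP where "PP = hyper_prior_joint n F HP"
  define PF where "PF = PiM {..<n} (\<lambda>_. F)"
  define T where "T = prob_algebra F \<Otimes>\<^sub>M PF"
  define sm where "sm = (\<Sum>i<n. 1 / real (m i))"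
  define mh where "mh = real n / sm"
  define Nn where "Nn = mh * real n"
  define M where "M = nat \<lceil>2 * Nn\<rceil>"
  define tk where "tk k = sqrt (8 * Nn * real k)" for k :: nat
  define Ck where "Ck k = exp (real k) * real M / \<delta>" for k :: nat
  define G where "G t p = ennreal (exp (t * Phi n m D l (snd (snd p)) (fst p)))" for t :: real and p :: "(nat \<Rightarrow> nat \<Rightarrow> 'z) \<times> ('f measure \<times> (nat \<Rightarrow> 'f))"
  define Lam where "Lam k S = (\<integral>\<^sup>+x. G (tk k) (S, x) \<partial>PP)" for k S
  define Bad where "Bad k = {S \<in> space SM. ennreal (Ck k) < Lam k S}" for k
  define E where "E = space SM - (\<Union>k\<in>{1..M}. Bad k)"
  have mi_pos: "real (m i) \<ge> 1" if "i < n" for i using m_pos that by simp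
  have sm_pos: "sm > 0" unfolding sm_def
  proof (rule sum_pos)
    fix i assume "i \<in> {..<n}"
    then have "real (m i) \<ge> 1" by (intro mi_pos) simp
    then show "0 < 1 / real (m i)" by simp
  qed (use n_pos in auto)
  have sm_le: "sm \<le> real n"
  proof -
    have "sm \<le> (\<Sum>i<n. 1)" unfolding sm_def
    proof (rule sum_mono)
      fix i assume "i \<in> {..<n}"
      then have "real (m i) \<ge> 1" by (intro mi_pos) simp
      then show "1 / real (m i) \<le> 1" by simp
    qed
    then show ?thesis by simp
  qed
  have Nn_eq: "Nn = (real n)\<^sup>2 / sm" unfolding Nn_def mh_def by (simp add: power2_eq_square)
  have Nn_sm: "Nn * sm = (real n)\<^sup>2" using sm_pos by (simp add: Nn_eq)
  have Nn1: "Nn \<ge> 1"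
  proof -
    have "(real n)\<^sup>2 / real n \<le> (real n)\<^sup>2 / sm" using sm_pos sm_le by (intro divide_left_mono) simp_all
    moreover have "(real n)\<^sup>2 / real n = real n" by (simp add: power2_eq_square)
    ultimately show ?thesis using n_pos Nn_eq by simp
  qed
  have M1: "real M \<ge> 2 * Nn"
  proof -
    have "\<lceil>2 * Nn\<rceil> \<ge> 0" using Nn1 by simp
    then have "real M = of_int \<lceil>2 * Nn\<rceil>" unfolding M_def by simp
    then show ?thesis by (simp add: le_of_int_ceiling)
  qed
  have Mpos: "real M > 0" using M1 Nn1 by linarith
  have SMp: "prob_space SM" unfolding SM_def sample_measure_def
    using D_prob by (intro prob_space_PiM) auto
  interpret SMp: prob_space SM by (rule SMp)
  have PPf: "finite_measure PP" unfolding PP_def by (rule hpj_finite[OF HP_prob(1)])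
  interpret PPf: finite_measure PP by (rule PPf)
  interpret pair_sigma_finite SM PP by unfold_locales
  have sPP: "sets PP = sets T" unfolding PP_def T_def PF_def by (rule hpj_sets[OF HP_prob(1)])
  have spPP: "space PP = space T" using sets_eq_imp_space_eq[OF sPP] .
  have PPle: "emeasure PP A \<le> 1" for A unfolding PP_def by (rule hpj_le1[OF HP_prob(1)])
  have snd_space: "snd x i \<in> space F" if "x \<in> space PP" "i < n" for x i
    using that spPP by (auto simp: T_def PF_def space_pair_measure space_PiM)
  have Phim0: "(\<lambda>(S, fs). Phi n m D l fs S) \<in> borel_measurable (SM \<Otimes>\<^sub>M PF)"
    unfolding SM_def PF_def by (rule Phi_meas[OF D_prob l_meas])
  have h: "(\<lambda>p. (fst p, snd (snd p))) \<in> measurable (SM \<Otimes>\<^sub>M T) (SM \<Otimes>\<^sub>M PF)"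
    unfolding T_def by measurable
  have "(\<lambda>p. (\<lambda>(S, fs). Phi n m D l fs S) (fst p, snd (snd p))) \<in> borel_measurable (SM \<Otimes>\<^sub>M T)"
    by (rule measurable_compose[OF h Phim0])
  then have Phim1: "(\<lambda>p. Phi n m D l (snd (snd p)) (fst p)) \<in> borel_measurable (SM \<Otimes>\<^sub>M PP)"
    by (simp add: measurable_cong_sets[OF sets_pair_measure_cong[OF refl sPP] refl])
  have Gm: "G t \<in> borel_measurable (SM \<Otimes>\<^sub>M PP)" for t
    unfolding G_def using Phim1 by measurable
  have Lamm: "Lam k \<in> borel_measurable SM" for k
  proof -
    have "case_prod (\<lambda>S x. G (tk k) (S, x)) \<in> borel_measurable (SM \<Otimes>\<^sub>M PP)"
      using Gm by simp
    then show ?thesis unfolding Lam_def by (rule PPf.borel_measurable_nn_integral)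
  qed
  have Bad_sets: "Bad k \<in> sets SM" for k
  proof -
    have [measurable]: "Lam k \<in> borel_measurable SM" by (rule Lamm)
    show ?thesis unfolding Bad_def by measurable
  qed
  have intLam: "(\<integral>\<^sup>+S. Lam k S \<partial>SM) \<le> ennreal (exp (real k))" if k1: "1 \<le> k" for k
  proof -
    have tpos: "tk k > 0" unfolding tk_def using Nn1 k1 by simp
    have tk2: "(tk k)\<^sup>2 * sm / (8 * (real n)\<^sup>2) = real k"
      unfolding tk_def using Nn1 n_pos Nn_sm by (simp add: field_simps)
    have "(\<integral>\<^sup>+S. Lam k S \<partial>SM) = (\<integral>\<^sup>+x. (\<integral>\<^sup>+S. G (tk k) (S, x) \<partial>SM) \<partial>PP)"
      unfolding Lam_def using Fubini[OF Gm[of "tk k"]] by simp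
    also have "\<dots> \<le> (\<integral>\<^sup>+x. ennreal (exp (real k)) \<partial>PP)"
    proof (rule nn_integral_mono)
      fix x assume x: "x \<in> space PP"
      have "(\<integral>\<^sup>+S. G (tk k) (S, x) \<partial>SM) = (\<integral>\<^sup>+S. ennreal (exp (tk k * Phi n m D l (snd x) S)) \<partial>sample_measure n m D)"
        unfolding G_def SM_def by simp
      also have "\<dots> \<le> ennreal (exp ((tk k)\<^sup>2 * (\<Sum>i<n. 1 / real (m i)) / (8 * (real n)\<^sup>2)))"
        by (rule sample_mgf[OF n_pos m_pos D_prob l_meas l_range _ tpos]) (use snd_space[OF x] in auto)
      also have "\<dots> = ennreal (exp (real k))" using tk2 unfolding sm_def by simp
      finally show "(\<integral>\<^sup>+S. G (tk k) (S, x) \<partial>SM) \<le> ennreal (exp (real k))" .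
    qed
    also have "\<dots> = ennreal (exp (real k)) * emeasure PP (space PP)" by simp
    also have "\<dots> \<le> ennreal (exp (real k)) * 1" by (intro mult_left_mono PPle) simp
    finally show ?thesis by simp
  qed
  have Bad_le: "measure SM (Bad k) \<le> \<delta> / real M" if k1: "1 \<le> k" for k
  proof -
    have Cpos: "Ck k > 0" unfolding Ck_def using Mpos \<delta>_pos by simp
    have sub: "Bad k \<subseteq> {S \<in> space SM. 1 \<le> ennreal (1 / Ck k) * Lam k S}"
    proof
      fix S assume "S \<in> Bad k"
      then have S: "S \<in> space SM" "ennreal (Ck k) < Lam k S" unfolding Bad_def by auto
      have "1 = ennreal (1 / Ck k) * ennreal (Ck k)" using Cpos by (simp flip: ennreal_mult)
      also have "\<dots> \<le> ennreal (1 / Ck k) * Lam k S" using S(2) by (intro mult_left_mono) auto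
      finally show "S \<in> {S \<in> space SM. 1 \<le> ennreal (1 / Ck k) * Lam k S}" using S(1) by simp
    qed
    have "emeasure SM (Bad k) \<le> emeasure SM {S \<in> space SM. 1 \<le> ennreal (1 / Ck k) * Lam k S}"
      by (rule emeasure_mono[OF sub]) (use Lamm in measurable)
    also have "\<dots> \<le> ennreal (1 / Ck k) * (\<integral>\<^sup>+S. Lam k S * indicator (space SM) S \<partial>SM)"
      by (rule nn_integral_Markov_inequality) (use Lamm in measurable)
    also have "(\<integral>\<^sup>+S. Lam k S * indicator (space SM) S \<partial>SM) = (\<integral>\<^sup>+S. Lam k S \<partial>SM)"
      by (intro nn_integral_cong) simp
    also have "ennreal (1 / Ck k) * \<dots> \<le> ennreal (1 / Ck k) * ennreal (exp (real k))"
      by (intro mult_left_mono intLam k1) simp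
    also have "\<dots> = ennreal (\<delta> / real M)"
      using Cpos Mpos \<delta>_pos by (simp add: Ck_def flip: ennreal_mult)
    finally have "emeasure SM (Bad k) \<le> ennreal (\<delta> / real M)" .
    then show ?thesis using \<delta>_pos Mpos by (simp add: SMp.emeasure_eq_measure)
  qed
  have E_sets: "E \<in> sets SM" unfolding E_def using Bad_sets by auto
  have E_meas: "measure SM E \<ge> 1 - \<delta>"
  proof -
    have U: "(\<Union>k\<in>{1..M}. Bad k) \<in> sets SM" using Bad_sets by auto
    have "measure SM (\<Union>k\<in>{1..M}. Bad k) \<le> (\<Sum>k\<in>{1..M}. measure SM (Bad k))"
      by (rule SMp.finite_measure_subadditive_finite) (use Bad_sets in auto)
    also have "\<dots> \<le> (\<Sum>k\<in>{1..M}. \<delta> / real M)" by (intro sum_mono Bad_le) auto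
    also have "\<dots> = \<delta>" using Mpos by simp
    finally have "measure SM (\<Union>k\<in>{1..M}. Bad k) \<le> \<delta>" .
    moreover have "measure SM E = 1 - measure SM (\<Union>k\<in>{1..M}. Bad k)"
      unfolding E_def by (rule SMp.prob_compl[OF U])
    ultimately show ?thesis by simp
  qed
  show ?thesis
  proof (rule bexI[of _ E], intro conjI)
    show "measure (sample_measure n m D) E \<ge> 1 - \<delta>" using E_meas SM_def by simp
    show "\<forall>S \<in> E. \<forall>HQ Q.
        prob_space HQ \<and> sets HQ = sets (prob_algebra F) \<and>
        (\<forall>i<n. prob_space (Q i) \<and> sets (Q i) = sets F) \<longrightarrow>
        (let mh = real n / (\<Sum>i<n. 1 / real (m i));
             KL = kl_div (hyper_post_joint n HQ Q) (hyper_prior_joint n F HP)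
         in ereal ((1 / real n) * (\<Sum>i<n. true_risk (D i) (l i) (Q i)))
            \<le> ereal ((1 / real n) * (\<Sum>i<n. emp_risk (m i) (l i) (Q i) (S i)))
               + sqrt_ext ((KL + ereal (ln (4 * mh * real n / \<delta>)) + 1) / ereal (2 * mh * real n)))"
    proof (intro ballI allI impI)
      fix S HQ Q
      assume SE: "S \<in> E"
      assume HQQ: "prob_space HQ \<and> sets HQ = sets (prob_algebra F) \<and> (\<forall>i<n. prob_space (Q i) \<and> sets (Q i) = sets F)"
      then have HQp: "prob_space HQ" and Qv: "\<forall>i<n. prob_space (Q i) \<and> sets (Q i) = sets F" by auto
      define QQ where "QQ = hyper_post_joint n HQ Q"
      define TT where "TT = (1 / real n) * (\<Sum>i<n. true_risk (D i) (l i) (Q i))"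
      define EE where "EE = (1 / real n) * (\<Sum>i<n. emp_risk (m i) (l i) (Q i) (S i))"
      define L where "L = ln (4 * mh * real n / \<delta>)"
      have S_sp: "S \<in> space SM" using SE E_def by auto
      have S_notbad: "S \<notin> Bad k" if "k \<in> {1..M}" for k using SE that E_def by auto
      have Sij: "S i j \<in> space Z" if "i < n" "j < m i" for i j
      proof -
        have "S i j \<in> space (D i)" using S_sp that unfolding SM_def sample_measure_def
          by (auto simp: space_PiM)
        then show ?thesis using D_prob that sets_eq_imp_space_eq[of "D i" Z] by auto
      qed
      have dform: "(\<integral>x. Phi n m D l (snd x) S \<partial>QQ) = TT - EE"
        unfolding QQ_def TT_def EE_def
        by (rule risk_identity[OF n_pos m_pos D_prob l_meas l_range HQp Qv]) (use Sij in auto)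
      have goal_fin: "ereal TT \<le> ereal EE + sqrt_ext ((ereal K + ereal L + 1) / ereal (2 * mh * real n))"
        if KLc: "sets QQ = sets PP \<and> absolutely_continuous PP QQ \<and> integrable QQ (entropy_density (exp 1) PP QQ)"
          and Kdef: "K = KL_divergence (exp 1) PP QQ" for K
      proof -
        have sQQ: "sets QQ = sets PP" and acQ: "absolutely_continuous PP QQ"
          and intQ: "integrable QQ (entropy_density (exp 1) PP QQ)" using KLc by auto
        have QQp: "prob_space QQ" unfolding QQ_def hyper_post_joint_def
          using Qv by (intro prob_space_pair HQp prob_space_PiM) auto
        have spQQ: "space QQ = space PP" using sets_eq_imp_space_eq[OF sQQ] .
        have Phib: "\<bar>Phi n m D l (snd x) S\<bar> \<le> 1" if "x \<in> space PP" for x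
          by (rule Phi_bound[OF n_pos m_pos D_prob l_meas l_range]) (use snd_space[OF that] in auto)
        have Phim2: "(\<lambda>x. Phi n m D l (snd x) S) \<in> borel_measurable PP"
          using measurable_Pair2[OF Phim1 S_sp] by simp
        have K0: "K \<ge> 0"
        proof -
          have "(\<integral>x. exp (0::real) \<partial>PP) \<le> 1"
            using PPle[of "space PP"] by (simp add: PPf.emeasure_eq_measure real_scaleR_def)
          then have "(\<integral>x. (\<lambda>_. 0::real) x \<partial>QQ) \<le> KL_divergence (exp 1) PP QQ + ln 1"
            by (intro PPf.DV[OF sQQ acQ QQp intQ, where B=0]) auto
          then show ?thesis using Kdef by simp
        qed
        have d1: "TT - EE \<le> 1"
        proof (cases "integrable QQ (\<lambda>x. Phi n m D l (snd x) S)")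
          case True
          interpret QQp: prob_space QQ by (rule QQp)
          have "(\<integral>x. Phi n m D l (snd x) S \<partial>QQ) \<le> (\<integral>x. 1 \<partial>QQ)"
            by (rule integral_mono[OF True QQp.integrable_const]) (use Phib spQQ in \<open>auto simp: abs_le_iff\<close>)
          then show ?thesis using dform by (simp add: QQp.prob_space)
        next
          case False then show ?thesis using dform by (simp add: not_integrable_integral_eq)
        qed
        have H: "sqrt (8 * Nn * real k) * (TT - EE) \<le> K + real k + ln (real M / \<delta>)"
          if k: "1 \<le> k" "k \<le> M" for k
        proof -
          have tpos: "tk k \<ge> 0" unfolding tk_def using Nn1 by simp
          have gm: "(\<lambda>x. tk k * Phi n m D l (snd x) S) \<in> borel_measurable PP" using Phim2 by measurable
          have gb: "\<bar>tk k * Phi n m D l (snd x) S\<bar> \<le> tk k" if "x \<in> space PP" for x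
            using Phib[OF that] tpos by (simp add: abs_mult mult_left_le)
          have inte: "integrable PP (\<lambda>x. exp (tk k * Phi n m D l (snd x) S))"
          proof (rule PPf.integrable_const_bound[where B="exp (tk k)"])
            show "AE x in PP. norm (exp (tk k * Phi n m D l (snd x) S)) \<le> exp (tk k)"
              using gb by (intro AE_I2) (auto simp: abs_le_iff)
          qed (use gm in measurable)
          have "Lam k S = ennreal (\<integral>x. exp (tk k * Phi n m D l (snd x) S) \<partial>PP)"
            unfolding Lam_def G_def by (simp add: nn_integral_eq_integral[OF inte])
          moreover have "Lam k S \<le> ennreal (Ck k)" using S_notbad[of k] k S_sp unfolding Bad_def by auto
          moreover have "Ck k \<ge> 0" unfolding Ck_def using Mpos \<delta>_pos by simp
          ultimately have ZC: "(\<integral>x. exp (tk k * Phi n m D l (snd x) S) \<partial>PP) \<le> Ck k"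
            by (simp add: ennreal_le_iff)
          have A1: "(\<integral>x. tk k * Phi n m D l (snd x) S \<partial>QQ) \<le> KL_divergence (exp 1) PP QQ + ln (Ck k)"
            by (rule PPf.DV[OF sQQ acQ QQp intQ gm gb ZC])
          have A2: "(\<integral>x. tk k * Phi n m D l (snd x) S \<partial>QQ) = tk k * (TT - EE)"
            unfolding integral_mult_right_zero dform ..
          have A3: "ln (Ck k) = real k + ln (real M / \<delta>)"
            unfolding Ck_def using Mpos \<delta>_pos by (simp add: ln_mult ln_div)
          have "tk k * (TT - EE) \<le> K + real k + ln (real M / \<delta>)" using A1 A2 A3 Kdef by linarith
          then show ?thesis by (simp add: tk_def)
        qed
        have main: "TT - EE \<le> sqrt ((K + ln (4 * Nn / \<delta>) + 1) / (2 * Nn))"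
          by (rule grid_arith[OF Nn1 \<delta>_pos \<delta>1 K0 d1 M_def H])
        have eL: "L = ln (4 * Nn / \<delta>)" unfolding L_def Nn_def by (simp add: mult.assoc)
        have e2: "2 * mh * real n = 2 * Nn" unfolding Nn_def by simp
        have Npos: "2 * Nn \<noteq> 0" using Nn1 by simp
        have "(ereal K + ereal L + 1) / ereal (2 * mh * real n) = ereal ((K + L + 1) / (2 * Nn))"
          unfolding e2 using Npos by (simp add: one_ereal_def)
        then have "sqrt_ext ((ereal K + ereal L + 1) / ereal (2 * mh * real n)) = ereal (sqrt ((K + L + 1) / (2 * Nn)))"
          by simp
        moreover have "TT \<le> EE + sqrt ((K + L + 1) / (2 * Nn))" using main eL by simp
        ultimately show ?thesis by simp
      qed
      show "let mh = real n / (\<Sum>i<n. 1 / real (m i));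
             KL = kl_div (hyper_post_joint n HQ Q) (hyper_prior_joint n F HP)
         in ereal ((1 / real n) * (\<Sum>i<n. true_risk (D i) (l i) (Q i)))
            \<le> ereal ((1 / real n) * (\<Sum>i<n. emp_risk (m i) (l i) (Q i) (S i)))
               + sqrt_ext ((KL + ereal (ln (4 * mh * real n / \<delta>)) + 1) / ereal (2 * mh * real n))"
      proof (cases "sets QQ = sets PP \<and> absolutely_continuous PP QQ \<and> integrable QQ (entropy_density (exp 1) PP QQ)")
        case True
        then have "kl_div QQ PP = ereal (KL_divergence (exp 1) PP QQ)" by (simp add: kl_div_def)
        then show ?thesis using goal_fin[OF True refl]
          unfolding Let_def QQ_def[symmetric] PP_def[symmetric] TT_def[symmetric] EE_def[symmetric]
            mh_def[symmetric] sm_def[symmetric] L_def[symmetric] by simp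
      next
        case False
        then have KLinf: "kl_div QQ PP = \<infinity>" by (simp add: kl_div_def)
        have pos: "2 * mh * real n > 0" unfolding mh_def using sm_pos n_pos by simp
        have "(\<infinity> + ereal L + 1) / ereal (2 * mh * real n) = \<infinity>"
          using pos by simp
        moreover have "sqrt_ext \<infinity> = \<infinity>" using sqrt_ext.simps(2) by simp
        ultimately show ?thesis using KLinf
          unfolding Let_def QQ_def[symmetric] PP_def[symmetric] TT_def[symmetric] EE_def[symmetric]
            mh_def[symmetric] sm_def[symmetric] L_def[symmetric] by simp
      qed
    qed
    show "E \<in> sets (sample_measure n m D)" using E_sets SM_def by simp
  qed
qed

end
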